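(* Under the hypotheses of Theorem 3.1 (i.e. $f:\mathbb{R}^d\to\mathbb{R}$ differentiable, bounded below, with $L$-Lipschitz gradient; $\{x_t\}$ generated by the SUM iteration with $\mu\in[0,1)$, $\lambda\in[0,1/(1-\mu)]$, positive step sizes with $\sum_t\eta_t=\infty$, $\sum_t\eta_t^2<\infty$, $\lim_{t\to\infty}\eta_{t-1}/\eta_t=1$; and $\mathbb{E}_t[g_t]=\nabla f(x_t)$, $\mathbb{E}\|g_t\|^2\le G^2$ for all $t$), we have $$\lim_{T\to\infty}\min_{t\in\{1,\dots,T\}}\mathbb{E}\|\nabla f(x_t)\|^2=0\qquad\text{and}\qquad \lim_{T\to\infty}\frac1T\sum_{t=1}^T\mathbb{E}\|\nabla f(x_t)\|^2=0 .$$
   Context: Stochastic unified momentum (SUM) iteration: given $x_1\in\mathbb{R}^d$, set $m_0=0$ and for $t=1,2,\dots$ $$m_t=\mu m_{t-1}-\eta_t g_t,\qquad x_{t+1}=x_t-\lambda\eta_t g_t+(1-\tilde\lambda)m_t,\qquad \tilde\lambda:=(1-\mu)\lambda,$$ where $g_t\in\mathbb{R}^d$ is a random vector (noisy gradient). $\mathbb{E}_t[\cdot]$ denotes the conditional expectation given $g_1,\dots,g_{t-1}$ (so $x_t$ and $m_{t-1}$ are determined by the conditioning), and $\mathbb{E}$ the total expectation. Norms are Euclidean. *)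

theory Defs
  imports "HOL-Probability.Probability"
begin

definition hist :: "'w measure \<Rightarrow> (nat \<Rightarrow> 'w \<Rightarrow> 'a::topological_space) \<Rightarrow> nat \<Rightarrow> 'w measure" where
  "hist M g t = sigma (space M)
     {g s -` A \<inter> space M | s A. 1 \<le> s \<and> s < t \<and> A \<in> sets borel}"

end

theory Submission
  imports Defs
begin

lemma integrable_dom:
  fixes f :: "'w \<Rightarrow> real"
  assumes "integrable M h" "f \<in> borel_measurable M" "\<And>w. w \<in> space M \<Longrightarrow> \<bar>f w\<bar> \<le> h w"
  shows "integrable M f"
  using assms by (intro Bochner_Integration.integrable_bound[OF assms(1,2)] AE_I2) (auto, smt (verit))

locale SUMloc =
  fixes M :: "'w measure"
    and f :: "'a::euclidean_space \<Rightarrow> real"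
    and grad :: "'a \<Rightarrow> 'a"
    and L G \<mu> lam :: real
    and \<eta> :: "nat \<Rightarrow> real"
    and g x m :: "nat \<Rightarrow> 'w \<Rightarrow> 'a"
  assumes M: "prob_space M"
    and f_grad: "\<And>z. (f has_derivative (\<lambda>h. grad z \<bullet> h)) (at z)"
    and f_bdd: "bdd_below (range f)"
    and Lip: "\<And>y z. norm (grad y - grad z) \<le> L * norm (y - z)"
    and mu: "0 \<le> \<mu>" "\<mu> < 1"
    and lam: "0 \<le> lam" "lam \<le> 1 / (1 - \<mu>)"
    and eta_pos: "\<And>t. t \<ge> 1 \<Longrightarrow> \<eta> t > 0"
    and eta_div: "\<not> summable (\<lambda>t. \<eta> (t + 1))"
    and eta_sq: "summable (\<lambda>t. (\<eta> (t + 1))\<^sup>2)"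
    and eta_ratio: "(\<lambda>t. \<eta> t / \<eta> (t + 1)) \<longlonglongrightarrow> 1"
    and x1: "\<exists>x1. \<forall>\<omega>\<in>space M. x 1 \<omega> = x1"
    and m0: "\<forall>\<omega>\<in>space M. m 0 \<omega> = 0"
    and m_step: "\<And>t \<omega>. t \<ge> 1 \<Longrightarrow> \<omega> \<in> space M \<Longrightarrow>
                   m t \<omega> = \<mu> *\<^sub>R m (t - 1) \<omega> - \<eta> t *\<^sub>R g t \<omega>"
    and x_step: "\<And>t \<omega>. t \<ge> 1 \<Longrightarrow> \<omega> \<in> space M \<Longrightarrow>
                   x (t + 1) \<omega> = x t \<omega> - (lam * \<eta> t) *\<^sub>R g t \<omega>
                                  + (1 - (1 - \<mu>) * lam) *\<^sub>R m t \<omega>"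
    and g_meas: "\<And>t. t \<ge> 1 \<Longrightarrow> g t \<in> borel_measurable M"
    and g_unbiased: "\<And>t b. t \<ge> 1 \<Longrightarrow> b \<in> Basis \<Longrightarrow>
                   AE \<omega> in M. real_cond_exp M (hist M g t) (\<lambda>\<omega>. g t \<omega> \<bullet> b) \<omega>
                                = grad (x t \<omega>) \<bullet> b"
    and g_sq_int: "\<And>t. t \<ge> 1 \<Longrightarrow> integrable M (\<lambda>\<omega>. (norm (g t \<omega>))\<^sup>2)"
    and g_bdd: "\<And>t. t \<ge> 1 \<Longrightarrow> integral\<^sup>L M (\<lambda>\<omega>. (norm (g t \<omega>))\<^sup>2) \<le> G\<^sup>2"
begin

interpretation P: prob_space M by (rule M)

lemma hist_gen_sub: "{g s -` A \<inter> space M | s A. 1 \<le> s \<and> s < t \<and> A \<in> sets borel} \<subseteq> sets M"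
  using g_meas by (auto intro: measurable_sets)

lemma space_hist[simp]: "space (hist M g t) = space M"
  unfolding hist_def by (simp add: space_measure_of_conv)

lemma sets_hist: "sets (hist M g t) = sigma_sets (space M) {g s -` A \<inter> space M | s A. 1 \<le> s \<and> s < t \<and> A \<in> sets borel}"
  unfolding hist_def using hist_gen_sub[of t] sets.sets_into_space
  by (intro sets_measure_of) blast

lemma subalg_hist: "subalgebra M (hist M g t)"
  unfolding subalgebra_def using sets_hist hist_gen_sub
  by (simp add: sets.sigma_sets_subset)

lemma sfs_hist: "sigma_finite_subalgebra M (hist M g t)"
  by (intro finite_measure_subalgebra_is_sigma_finite)
     (simp add: finite_measure_subalgebra_def finite_measure_subalgebra_axioms_def subalg_hist P.finite_measure_axioms)

lemma g_meas_hist: "1 \<le> s \<Longrightarrow> s < t \<Longrightarrow> g s \<in> borel_measurable (hist M g t)"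
  by (rule measurableI) (auto simp: sets_hist intro!: sigma_sets.Basic)

definition c where "c = 1 - (1 - \<mu>) * lam"

lemma c_ge: "0 \<le> c" "c \<le> 1"
proof -
  have "(1 - \<mu>) * lam \<le> (1-\<mu>) * (1/(1-\<mu>))" using lam mu by (intro mult_left_mono) auto
  then show "0 \<le> c" using mu unfolding c_def by auto
  show "c \<le> 1" using lam mu unfolding c_def by auto
qed

lemma meas_gen:
  assumes sp: "space N = space M" and gN: "\<And>s. 1 \<le> s \<Longrightarrow> s < t \<Longrightarrow> g s \<in> borel_measurable N"
  shows "\<And>s. 1 \<le> s \<Longrightarrow> s \<le> t \<Longrightarrow> x s \<in> borel_measurable N"
    and "\<And>s. s < t \<Longrightarrow> m s \<in> borel_measurable N"
proof -
  have mm: "s < t \<Longrightarrow> m s \<in> borel_measurable N" for s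
  proof (induction s)
    case 0 then show ?case using m0 sp by (subst measurable_cong[where g="\<lambda>_. 0"]) auto
  next
    case (Suc s)
    have [measurable]: "m s \<in> borel_measurable N" "g (Suc s) \<in> borel_measurable N" using Suc gN by auto
    show ?case using sp m_step[of "Suc s"]
      by (subst measurable_cong[where g="\<lambda>w. \<mu> *\<^sub>R m s w - \<eta> (Suc s) *\<^sub>R g (Suc s) w"]) auto
  qed
  have xx: "1 \<le> s \<Longrightarrow> s \<le> t \<Longrightarrow> x s \<in> borel_measurable N" for s
  proof (induction s)
    case 0 then show ?case by simp
  next
    case (Suc s)
    show ?case
    proof (cases "s = 0")
      case True
      obtain x1' where "\<forall>\<omega>\<in>space M. x 1 \<omega> = x1'" using x1 by blast
      then show ?thesis using True sp by (subst measurable_cong[where g="\<lambda>_. x1'"]) auto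
    next
      case False
      have [measurable]: "x s \<in> borel_measurable N" "g s \<in> borel_measurable N" "m s \<in> borel_measurable N"
        using Suc False gN mm by auto
      show ?thesis using sp x_step[of s] False
        by (subst measurable_cong[where g="\<lambda>w. x s w - (lam * \<eta> s) *\<^sub>R g s w + (1 - (1 - \<mu>) * lam) *\<^sub>R m s w"]) auto
    qed
  qed
  show "\<And>s. 1 \<le> s \<Longrightarrow> s \<le> t \<Longrightarrow> x s \<in> borel_measurable N" using xx by blast
  show "\<And>s. s < t \<Longrightarrow> m s \<in> borel_measurable N" using mm by blast
qed

lemma x_meas[measurable]: "1 \<le> s \<Longrightarrow> x s \<in> borel_measurable M"
  using meas_gen(1)[of M s s] g_meas by auto

lemma m_meas[measurable]: "m s \<in> borel_measurable M"
  using meas_gen(2)[of M "Suc s" s] g_meas by auto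

lemma x_meas_hist: "1 \<le> s \<Longrightarrow> s \<le> t \<Longrightarrow> x s \<in> borel_measurable (hist M g t)"
  using meas_gen(1)[of "hist M g t" t s] g_meas_hist by auto

lemma m_meas_hist: "s < t \<Longrightarrow> m s \<in> borel_measurable (hist M g t)"
  using meas_gen(2)[of "hist M g t" t s] g_meas_hist by auto

end

lemma descent_gen:
  fixes f :: "'a::euclidean_space \<Rightarrow> real"
  assumes fg: "\<And>z. (f has_derivative (\<lambda>h. grad z \<bullet> h)) (at z)"
    and Lip: "\<And>y z. norm (grad y - grad z) \<le> K * norm (y - z)" and K: "K \<ge> 0"
  shows "f y \<le> f x + grad x \<bullet> (y - x) + K * (norm (y - x))\<^sup>2"
proof -
  define v where "v = y - x"
  define \<phi> where "\<phi> s = f (x + s *\<^sub>R v)" for s :: real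
  have d: "(\<phi> has_real_derivative (grad (x + s *\<^sub>R v) \<bullet> v)) (at s)" for s
  proof -
    have l: "((\<lambda>s. x + s *\<^sub>R v) has_derivative (\<lambda>h. h *\<^sub>R v)) (at s)"
      by (auto intro!: derivative_eq_intros)
    have "((\<lambda>s. f (x + s *\<^sub>R v)) has_derivative (\<lambda>h. grad (x + s *\<^sub>R v) \<bullet> (h *\<^sub>R v))) (at s)"
      using has_derivative_compose[OF l fg] by (simp add: o_def)
    moreover have "(\<lambda>h. grad (x + s *\<^sub>R v) \<bullet> (h *\<^sub>R v)) = (*) (grad (x + s *\<^sub>R v) \<bullet> v)"
      by (auto simp: inner_scaleR_right)
    ultimately show ?thesis unfolding \<phi>_def has_field_derivative_def by simp
  qed
  obtain z where z: "0 < z" "z < 1" "\<phi> 1 - \<phi> 0 = (1 - 0) * (grad (x + z *\<^sub>R v) \<bullet> v)"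
    using MVT2[of 0 1 \<phi> "\<lambda>s. grad (x + s *\<^sub>R v) \<bullet> v"] d by auto
  have "grad (x + z *\<^sub>R v) \<bullet> v - grad x \<bullet> v = (grad (x + z *\<^sub>R v) - grad x) \<bullet> v"
    by (simp add: inner_diff_left)
  also have "\<dots> \<le> norm (grad (x + z *\<^sub>R v) - grad x) * norm v" by (rule norm_cauchy_schwarz)
  also have "\<dots> \<le> (K * norm (z *\<^sub>R v)) * norm v" using Lip[of "x + z *\<^sub>R v" x] by (intro mult_right_mono) auto
  also have "\<dots> \<le> K * (norm v)\<^sup>2"
  proof -
    have "z * norm v \<le> norm v" using z by (intro mult_left_le_one_le) auto
    then have "K * (z * norm v) * norm v \<le> K * norm v * norm v" using K by (intro mult_right_mono mult_left_mono) auto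
    then show ?thesis using z by (simp add: power2_eq_square mult.assoc)
  qed
  finally show ?thesis using z unfolding \<phi>_def v_def by simp
qed

lemma grad_bound_gen:
  fixes f :: "'a::euclidean_space \<Rightarrow> real"
  assumes fg: "\<And>z. (f has_derivative (\<lambda>h. grad z \<bullet> h)) (at z)"
    and Lip: "\<And>y z. norm (grad y - grad z) \<le> K * norm (y - z)" and K: "K > 0"
    and lb: "\<And>z. fs \<le> f z"
  shows "(norm (grad x))\<^sup>2 \<le> 4 * K * (f x - fs)"
proof -
  define y where "y = x - (1 / (2*K)) *\<^sub>R grad x"
  have "fs \<le> f y" by (rule lb)
  also have "\<dots> \<le> f x + grad x \<bullet> (y - x) + K * (norm (y - x))\<^sup>2"
    using descent_gen[OF fg Lip] K by auto
  also have "\<dots> = f x - (1/(2*K)) * (norm (grad x))\<^sup>2 + K * (1/(2*K))^2 * (norm (grad x))\<^sup>2"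
    unfolding y_def using K by (simp add: power2_norm_eq_inner[symmetric] power_divide power_mult_distrib field_simps)
  also have "\<dots> = f x - (1/(4*K)) * (norm (grad x))\<^sup>2"
    using K by (simp add: field_simps power2_eq_square)
  finally show ?thesis using K by (simp add: field_simps)
qed


lemma telescope_inc:
  fixes a e :: "nat \<Rightarrow> real"
  assumes inc: "\<And>t. t \<ge> N \<Longrightarrow> a (Suc t) \<le> a t + C * e t"
  shows "r \<ge> N \<Longrightarrow> a (r + k) \<le> a r + C * sum e {r..<r+k}"
proof (induction k)
  case 0 then show ?case by simp
next
  case (Suc k)
  have "a (r + Suc k) \<le> a (r + k) + C * e (r + k)" using inc[of "r+k"] Suc by simp
  also have "\<dots> \<le> a r + C * sum e {r..<r+k} + C * e (r+k)" using Suc by simp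
  finally show ?case by (simp add: algebra_simps)
qed

lemma seq_to_zero:
  fixes a e :: "nat \<Rightarrow> real"
  assumes a0: "\<And>t. 0 \<le> a t" and ep: "\<And>t. 0 < e t"
    and sm: "summable (\<lambda>t. e t * a t)" and dv: "\<not> summable e" and e0: "e \<longlonglongrightarrow> 0"
    and inc0: "\<And>t. t \<ge> N \<Longrightarrow> a (Suc t) \<le> a t + C0 * e t"
  shows "a \<longlonglongrightarrow> 0"
proof (rule LIMSEQ_I)
  fix \<epsilon> :: real assume \<epsilon>: "0 < \<epsilon>"
  define C where "C = max C0 1"
  have C: "C > 0" unfolding C_def by auto
  have inc: "a (Suc t) \<le> a t + C * e t" if "t \<ge> N" for t
  proof -
    have "C0 * e t \<le> C * e t" using ep[of t] unfolding C_def by (intro mult_right_mono) auto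
    then show ?thesis using inc0[OF that] by simp
  qed
  show "\<exists>N0. \<forall>t\<ge>N0. norm (a t - 0) < \<epsilon>"
  proof (rule ccontr)
    assume H: "\<not> ?thesis"
    then have freq: "\<exists>t\<ge>N0. a t \<ge> \<epsilon>" for N0 using a0 by (auto simp: not_less)
    define \<delta> where "\<delta> = \<epsilon> * \<epsilon> / (8 * C)"
    have \<delta>: "\<delta> > 0" using \<epsilon> C unfolding \<delta>_def by auto
    obtain N2 where N2: "\<forall>m\<ge>N2. \<forall>n. norm (sum (\<lambda>t. e t * a t) {m..<n}) < \<delta>"
      using sm \<delta> unfolding summable_Cauchy by blast
    obtain N3 where N3: "\<forall>t\<ge>N3. norm (e t - 0) < \<epsilon> / (4 * C)"
      using LIMSEQ_D[OF e0, of "\<epsilon>/(4*C)"] \<epsilon> C by auto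
    define N1 where "N1 = max N (max N2 N3)"
    have "\<exists>T. sum e {N1..<T} > \<epsilon> / (2 * C)"
    proof (rule ccontr)
      assume "\<not> ?thesis"
      then have b: "sum e {N1..<T} \<le> \<epsilon> / (2*C)" for T by (auto simp: not_less)
      have "summable (\<lambda>t. e (t + N1))"
      proof (rule bounded_imp_summable[where B="\<epsilon> / (2*C)"])
        show "0 \<le> e (n + N1)" for n using ep[of "n+N1"] by simp
        show "(\<Sum>k\<le>n. e (k + N1)) \<le> \<epsilon> / (2 * C)" for n
        proof -
          have "(\<Sum>k\<le>n. e (k + N1)) = sum e {N1..<Suc n + N1}"
            by (induction n) (auto simp: add.commute)
          then show ?thesis using b[of "Suc n + N1"] by (simp del: sum.op_ivl_Suc)
        qed
      qed
      then show False using dv by (simp add: summable_iff_shift)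
    qed
    then obtain T where T: "sum e {N1..<T} > \<epsilon> / (2 * C)" by blast
    obtain t2 where t2: "t2 \<ge> max T N1" "a t2 \<ge> \<epsilon>" using freq by blast
    have sT: "sum e {N1..<t2} > \<epsilon> / (2 * C)"
    proof -
      have "sum e {N1..<T} \<le> sum e {N1..<t2}" using t2 ep by (intro sum_mono2) (auto intro: less_imp_le)
      then show ?thesis using T by simp
    qed
    define P where "P r \<longleftrightarrow> N1 \<le> r \<and> sum e {r..<t2} \<le> \<epsilon> / (2 * C)" for r
    have Pt2: "P t2" using t2 \<epsilon> C unfolding P_def by auto
    define rs where "rs = (LEAST r. P r)"
    have Prs: "P rs" unfolding rs_def by (rule LeastI[of P, OF Pt2])
    have rs_le: "rs \<le> t2" unfolding rs_def by (rule Least_le[of P, OF Pt2])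
    have rs_gt: "rs > N1" using Prs sT unfolding P_def by (cases "rs = N1") auto
    have notP: "\<not> P (rs - 1)"
    proof
      assume "P (rs - 1)"
      then have "rs \<le> rs - 1" unfolding rs_def by (rule Least_le[of P])
      then show False using rs_gt by simp
    qed
    then have big: "sum e {rs - 1..<t2} > \<epsilon> / (2 * C)" using rs_gt unfolding P_def by auto
    have split: "sum e {rs - 1..<t2} = e (rs - 1) + sum e {rs..<t2}"
      using rs_gt rs_le by (subst sum.atLeast_Suc_lessThan) (auto simp: Suc_diff_1)
    have esmall: "e (rs - 1) < \<epsilon> / (4 * C)"
    proof -
      have "rs - 1 \<ge> N3" using rs_gt unfolding N1_def by auto
      then have "\<bar>e (rs - 1)\<bar> < \<epsilon> / (4 * C)" using N3 by auto
      then show ?thesis by simp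
    qed
    have half: "\<epsilon> / (2 * C) = \<epsilon> / (4 * C) + \<epsilon> / (4 * C)" using C by (simp add: field_simps)
    have lowsum: "sum e {rs..<t2} > \<epsilon> / (4 * C)" using big split esmall half by linarith
    have alow: "a r \<ge> \<epsilon> / 2" if r: "rs \<le> r" "r < t2" for r
    proof -
      have "a (r + (t2 - r)) \<le> a r + C * sum e {r..<r + (t2 - r)}"
        using telescope_inc[of N a C e r "t2 - r"] inc r rs_gt unfolding N1_def by auto
      then have "a t2 \<le> a r + C * sum e {r..<t2}" using r by simp
      moreover have "sum e {r..<t2} \<le> sum e {rs..<t2}" using r ep by (intro sum_mono2) (auto intro: less_imp_le)
      moreover have "sum e {rs..<t2} \<le> \<epsilon> / (2*C)" using Prs unfolding P_def by auto
      ultimately have "a t2 \<le> a r + C * (\<epsilon> / (2*C))" using C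
        by (smt (verit, ccfv_SIG) mult_left_mono)
      then show ?thesis using t2 C by simp
    qed
    have "sum (\<lambda>t. e t * a t) {rs..<t2} \<ge> sum (\<lambda>t. e t * (\<epsilon>/2)) {rs..<t2}"
      using alow ep by (intro sum_mono mult_left_mono) (auto intro: less_imp_le)
    also have "sum (\<lambda>t. e t * (\<epsilon>/2)) {rs..<t2} = (\<epsilon>/2) * sum e {rs..<t2}"
      by (simp add: sum_distrib_left mult.commute)
    finally have "sum (\<lambda>t. e t * a t) {rs..<t2} \<ge> (\<epsilon>/2) * sum e {rs..<t2}" .
    moreover have "(\<epsilon>/2) * sum e {rs..<t2} \<ge> (\<epsilon>/2) * (\<epsilon> / (4 * C))"
      using lowsum \<epsilon> by (intro mult_left_mono) auto
    moreover have "(\<epsilon>/2) * (\<epsilon> / (4 * C)) = \<delta>" unfolding \<delta>_def by (simp add: field_simps)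
    moreover have "norm (sum (\<lambda>t. e t * a t) {rs..<t2}) < \<delta>" using N2 rs_gt unfolding N1_def by auto
    ultimately show False by simp
  qed
qed

lemma cesaro0:
  fixes a :: "nat \<Rightarrow> real"
  assumes "a \<longlonglongrightarrow> 0"
  shows "(\<lambda>T. (\<Sum>t=1..T. a t) / real T) \<longlonglongrightarrow> 0"
proof (rule LIMSEQ_I)
  fix \<epsilon> :: real assume \<epsilon>: "\<epsilon> > 0"
  obtain N where N: "\<forall>t\<ge>N. norm (a t - 0) < \<epsilon>/2" using LIMSEQ_D[OF assms, of "\<epsilon>/2"] \<epsilon> by auto
  define S where "S = (\<Sum>t<N. \<bar>a t\<bar>)"
  have S0: "S \<ge> 0" unfolding S_def by (auto intro: sum_nonneg)
  obtain K :: nat where K: "real K > 2 * S / \<epsilon>" using reals_Archimedean2 by blast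
  show "\<exists>N0. \<forall>T\<ge>N0. norm ((\<Sum>t=1..T. a t) / real T - 0) < \<epsilon>"
  proof (intro exI[of _ "Suc K"] allI impI)
    fix T assume T: "T \<ge> Suc K"
    have Tpos: "real T > 0" using T by auto
    have "\<bar>\<Sum>t=1..T. a t\<bar> \<le> (\<Sum>t=1..T. \<bar>a t\<bar>)" by (rule sum_abs)
    also have "\<dots> \<le> (\<Sum>t\<in>{..<N} \<union> {1..T}. \<bar>a t\<bar>)" by (intro sum_mono2) auto
    also have "\<dots> \<le> (\<Sum>t<N. \<bar>a t\<bar>) + (\<Sum>t\<in>{1..T} - {..<N}. \<bar>a t\<bar>)"
    proof -
      have "{..<N} \<union> {1..T} = {..<N} \<union> ({1..T} - {..<N})" by auto
      then show ?thesis by (simp only:) (subst sum.union_disjoint, auto)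
    qed
    also have "(\<Sum>t\<in>{1..T} - {..<N}. \<bar>a t\<bar>) \<le> (\<Sum>t\<in>{1..T} - {..<N}. \<epsilon>/2)"
      using N by (intro sum_mono) (auto simp: not_less less_imp_le)
    also have "\<dots> \<le> real T * (\<epsilon>/2)"
    proof -
      have "card ({1..T} - {..<N}) \<le> T"
        by (metis card_Diff_subset card_atLeastAtMost diff_Suc_1 diff_le_self finite_lessThan le_trans Diff_subset card_mono finite_atLeastAtMost)
      then show ?thesis using \<epsilon> by (simp add: mult_right_mono)
    qed
    finally have b: "\<bar>\<Sum>t=1..T. a t\<bar> \<le> S + real T * (\<epsilon>/2)" unfolding S_def by simp
    have "S < real T * (\<epsilon>/2)"
    proof -
      have "2 * S / \<epsilon> < real T" using K T by linarith
      then show ?thesis using \<epsilon> by (simp add: field_simps)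
    qed
    then have "\<bar>\<Sum>t=1..T. a t\<bar> < real T * \<epsilon>" using b by linarith
    then show "norm ((\<Sum>t=1..T. a t) / real T - 0) < \<epsilon>" using Tpos by (simp add: field_simps)
  qed
qed


primrec hs :: "real \<Rightarrow> (nat \<Rightarrow> real) \<Rightarrow> nat \<Rightarrow> real" where
  "hs \<mu> \<eta> 0 = 0"
| "hs \<mu> \<eta> (Suc t) = \<mu> * hs \<mu> \<eta> t + \<eta> (Suc t)"

lemma hs_nonneg:
  assumes "0 \<le> \<mu>" "\<And>t. t \<ge> 1 \<Longrightarrow> \<eta> t > 0"
  shows "hs \<mu> \<eta> t \<ge> 0"
proof (induction t)
  case 0 then show ?case by simp
next
  case (Suc t)
  have "\<mu> * hs \<mu> \<eta> t \<ge> 0" using Suc assms(1) by simp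
  moreover have "\<eta> (Suc t) > 0" using assms(2) by simp
  ultimately show ?case by simp
qed

lemma hs_pos:
  assumes "0 \<le> \<mu>" "\<And>t. t \<ge> 1 \<Longrightarrow> \<eta> t > 0"
  shows "hs \<mu> \<eta> (Suc t) > 0"
proof -
  have "\<mu> * hs \<mu> \<eta> t \<ge> 0" using hs_nonneg[where t=t, OF assms] assms(1) by simp
  then show ?thesis using assms(2)[of "Suc t"] by simp
qed

lemma hs_bound:
  assumes "0 \<le> \<mu>" "\<mu> < 1" "K \<ge> 0" "\<And>t. \<eta> (Suc t) \<le> K"
  shows "hs \<mu> \<eta> t \<le> K / (1 - \<mu>)"
proof (induction t)
  case 0 then show ?case using assms by simp
next
  case (Suc t)
  have "hs \<mu> \<eta> (Suc t) \<le> \<mu> * (K / (1 - \<mu>)) + K"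
  proof -
    have "\<mu> * hs \<mu> \<eta> t \<le> \<mu> * (K / (1 - \<mu>))" using Suc assms(1) by (rule mult_left_mono)
    then show ?thesis using assms(4)[of t] by simp
  qed
  also have "\<dots> = K / (1 - \<mu>)" using assms by (simp add: field_simps)
  finally show ?case .
qed

lemma hs_ratio:
  assumes mu: "0 \<le> \<mu>" "\<mu> < 1" and ep: "\<And>t. t \<ge> 1 \<Longrightarrow> \<eta> t > 0"
    and r: "(\<lambda>t. \<eta> t / \<eta> (t + 1)) \<longlonglongrightarrow> 1"
  shows "\<exists>B N. \<forall>t\<ge>N. hs \<mu> \<eta> t \<le> B * \<eta> (Suc t)"
proof -
  define \<rho> where "\<rho> = 2 / (1 + \<mu>)"
  have \<rho>1: "\<rho> > 1" using mu unfolding \<rho>_def by (simp add: field_simps)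
  have \<rho>\<mu>: "\<rho> * \<mu> < 1" using mu unfolding \<rho>_def by (simp add: field_simps)
  obtain N0 where N0: "\<forall>t\<ge>N0. norm (\<eta> t / \<eta> (t + 1) - 1) < \<rho> - 1"
    using LIMSEQ_D[OF r, of "\<rho> - 1"] \<rho>1 by auto
  define N where "N = max N0 1"
  have rat: "\<eta> t \<le> \<rho> * \<eta> (Suc t)" if "t \<ge> N" for t
  proof -
    have "\<eta> t / \<eta> (t + 1) < \<rho>" using N0 that unfolding N_def by fastforce
    moreover have "\<eta> (Suc t) > 0" using ep by simp
    ultimately show ?thesis by (simp add: field_simps)
  qed
  define B where "B = max (hs \<mu> \<eta> N / \<eta> (Suc N)) (\<rho> / (1 - \<rho> * \<mu>))"
  have "hs \<mu> \<eta> (N + k) \<le> B * \<eta> (Suc (N + k))" for k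
  proof (induction k)
    case 0
    have "hs \<mu> \<eta> N = (hs \<mu> \<eta> N / \<eta> (Suc N)) * \<eta> (Suc N)" using ep[of "Suc N"] by simp
    also have "\<dots> \<le> B * \<eta> (Suc N)" unfolding B_def using ep[of "Suc N"] by (intro mult_right_mono) auto
    finally show ?case by simp
  next
    case (Suc k)
    obtain t where t_def: "t = N + k" by blast
    have IH: "hs \<mu> \<eta> t \<le> B * \<eta> (Suc t)" using Suc unfolding t_def by simp
    have e1: "\<eta> (Suc t) \<le> \<rho> * \<eta> (Suc (Suc t))" using rat[of "Suc t"] unfolding t_def by simp
    have B0: "B \<ge> \<rho> / (1 - \<rho> * \<mu>)" unfolding B_def by simp
    have "0 < \<rho> / (1 - \<rho> * \<mu>)" using \<rho>1 \<rho>\<mu> by simp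
    then have Bp: "B > 0" using B0 by linarith
    have key: "\<rho> * (\<mu> * B + 1) \<le> B"
    proof -
      have "\<rho> \<le> B * (1 - \<rho> * \<mu>)" using B0 \<rho>\<mu> by (simp add: field_simps)
      then show ?thesis by (simp add: algebra_simps)
    qed
    have "hs \<mu> \<eta> (Suc t) = \<mu> * hs \<mu> \<eta> t + \<eta> (Suc t)" by simp
    also have "\<dots> \<le> \<mu> * (B * \<eta> (Suc t)) + \<eta> (Suc t)" using IH mu by (simp add: mult_left_mono)
    also have "\<dots> = (\<mu> * B + 1) * \<eta> (Suc t)" by (simp add: algebra_simps)
    also have "\<dots> \<le> (\<mu> * B + 1) * (\<rho> * \<eta> (Suc (Suc t)))" using e1 mu Bp by (intro mult_left_mono) auto
    also have "\<dots> = (\<rho> * (\<mu> * B + 1)) * \<eta> (Suc (Suc t))" by simp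
    also have "\<dots> \<le> B * \<eta> (Suc (Suc t))" using key ep[of "Suc (Suc t)"] by (intro mult_right_mono) auto
    finally show ?case unfolding t_def by simp
  qed
  then have "\<forall>t\<ge>N. hs \<mu> \<eta> t \<le> B * \<eta> (Suc t)" by (metis le_add_diff_inverse)
  then show ?thesis by blast
qed


lemma cs2:
  fixes \<mu> h e u v :: real
  assumes "h > 0" "\<mu> \<ge> 0" "e \<ge> 0"
  shows "(\<mu> * u + e * v)\<^sup>2 \<le> (\<mu> * h + e) * (\<mu> * u\<^sup>2 / h + e * v\<^sup>2)"
proof -
  have "(\<mu> * h + e) * (\<mu> * u\<^sup>2 / h + e * v\<^sup>2) - (\<mu> * u + e * v)\<^sup>2 = \<mu> * e * (h * v - u)\<^sup>2 / h"
    using assms by (simp add: field_simps power2_eq_square)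
  moreover have "\<mu> * e * (h * v - u)\<^sup>2 / h \<ge> 0" using assms by simp
  ultimately show ?thesis by linarith
qed

context SUMloc
begin

interpretation P: prob_space M by (rule M)

definition L1 where "L1 = \<bar>L\<bar> + 1"

lemma L1_pos: "L1 > 0" unfolding L1_def by simp

lemma Lip1: "norm (grad y - grad z) \<le> L1 * norm (y - z)"
proof -
  have "L * norm (y - z) \<le> L1 * norm (y - z)" unfolding L1_def by (intro mult_right_mono) auto
  then show ?thesis using Lip[of y z] by linarith
qed

lemma grad_meas[measurable]: "grad \<in> borel_measurable borel"
proof (rule borel_measurable_continuous_onI)
  have "L1-lipschitz_on UNIV grad"
    using Lip1 L1_pos by (intro lipschitz_onI) (auto simp: dist_norm)
  then show "continuous_on UNIV grad" by (rule lipschitz_on_continuous_on)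
qed

lemma f_meas[measurable]: "f \<in> borel_measurable borel"
proof (rule borel_measurable_continuous_onI)
  show "continuous_on UNIV f"
    using f_grad by (intro continuous_at_imp_continuous_on ballI has_derivative_continuous) auto
qed

definition fs where "fs = Inf (range f)"

lemma f_lb: "fs \<le> f z"
  unfolding fs_def using f_bdd by (intro cInf_lower) auto

lemma descent: "f y \<le> f z + grad z \<bullet> (y - z) + L1 * (norm (y - z))\<^sup>2"
  using descent_gen[OF f_grad Lip1] L1_pos by auto

lemma grad_bound: "(norm (grad z))\<^sup>2 \<le> 4 * L1 * (f z - fs)"
  using grad_bound_gen[OF f_grad Lip1 L1_pos f_lb] .

abbreviation h where "h \<equiv> hs \<mu> \<eta>"

lemma h_nonneg: "h t \<ge> 0" using hs_nonneg[OF mu(1) eta_pos] .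
lemma h_pos: "h (Suc t) > 0" using hs_pos[OF mu(1) eta_pos] .

lemma m_norm_step: "\<omega> \<in> space M \<Longrightarrow> norm (m (Suc n) \<omega>) \<le> \<mu> * norm (m n \<omega>) + \<eta> (Suc n) * norm (g (Suc n) \<omega>)"
proof -
  assume w: "\<omega> \<in> space M"
  have "norm (m (Suc n) \<omega>) = norm (\<mu> *\<^sub>R m n \<omega> - \<eta> (Suc n) *\<^sub>R g (Suc n) \<omega>)" using m_step[of "Suc n"] w by simp
  also have "\<dots> \<le> norm (\<mu> *\<^sub>R m n \<omega>) + norm (\<eta> (Suc n) *\<^sub>R g (Suc n) \<omega>)" by (rule norm_triangle_ineq4)
  also have "\<dots> = \<mu> * norm (m n \<omega>) + \<eta> (Suc n) * norm (g (Suc n) \<omega>)"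
    using mu eta_pos[of "Suc n"] by simp
  finally show ?thesis .
qed

lemma m_mom: "integrable M (\<lambda>\<omega>. (norm (m n \<omega>))\<^sup>2) \<and> integral\<^sup>L M (\<lambda>\<omega>. (norm (m n \<omega>))\<^sup>2) \<le> G\<^sup>2 * (h n)\<^sup>2"
proof (induction n)
  case 0
  have "integrable M (\<lambda>\<omega>. (norm (m 0 \<omega>))\<^sup>2) = integrable M (\<lambda>\<omega>. 0::real)"
    using m0 by (intro Bochner_Integration.integrable_cong) auto
  moreover have "integral\<^sup>L M (\<lambda>\<omega>. (norm (m 0 \<omega>))\<^sup>2) = integral\<^sup>L M (\<lambda>\<omega>. 0::real)"
    using m0 by (intro Bochner_Integration.integral_cong) auto
  ultimately show ?case by simp
next
  case (Suc n)
  have gi: "integrable M (\<lambda>\<omega>. (norm (g (Suc n) \<omega>))\<^sup>2)" using g_sq_int by simp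
  have gb: "integral\<^sup>L M (\<lambda>\<omega>. (norm (g (Suc n) \<omega>))\<^sup>2) \<le> G\<^sup>2" using g_bdd by simp
  have ep: "\<eta> (Suc n) > 0" using eta_pos by simp
  show ?case
  proof (cases n)
    case 0
    have eq: "(norm (m (Suc n) \<omega>))\<^sup>2 = (\<eta> (Suc n))\<^sup>2 * (norm (g (Suc n) \<omega>))\<^sup>2" if "\<omega> \<in> space M" for \<omega>
      using m_step[of "Suc n" \<omega>] m0 that 0 ep by (simp add: power_mult_distrib)
    have i: "integrable M (\<lambda>\<omega>. (norm (m (Suc n) \<omega>))\<^sup>2)"
      using gi eq by (subst Bochner_Integration.integrable_cong[OF refl eq]) auto
    have "integral\<^sup>L M (\<lambda>\<omega>. (norm (m (Suc n) \<omega>))\<^sup>2) = (\<eta> (Suc n))\<^sup>2 * integral\<^sup>L M (\<lambda>\<omega>. (norm (g (Suc n) \<omega>))\<^sup>2)"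
      using eq by (subst Bochner_Integration.integral_cong[OF refl eq]) auto
    also have "\<dots> \<le> (\<eta> (Suc n))\<^sup>2 * G\<^sup>2" using gb by (intro mult_left_mono) auto
    finally show ?thesis using i 0 by (simp add: mult.commute)
  next
    case (Suc k)
    have hp: "h n > 0" using Suc h_pos by simp
    define R where "R \<omega> = h (Suc n) * (\<mu> * (norm (m n \<omega>))\<^sup>2 / h n + \<eta> (Suc n) * (norm (g (Suc n) \<omega>))\<^sup>2)" for \<omega>
    have Ri: "integrable M R" unfolding R_def using Suc.IH gi by auto
    have pw: "(norm (m (Suc n) \<omega>))\<^sup>2 \<le> R \<omega>" if w: "\<omega> \<in> space M" for \<omega>
    proof -
      have "(norm (m (Suc n) \<omega>))\<^sup>2 \<le> (\<mu> * norm (m n \<omega>) + \<eta> (Suc n) * norm (g (Suc n) \<omega>))\<^sup>2"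
        using m_norm_step[OF w] by (intro power_mono) auto
      also have "\<dots> \<le> R \<omega>" unfolding R_def using cs2[OF hp mu(1), of "\<eta> (Suc n)"] ep by simp
      finally show ?thesis .
    qed
    have i: "integrable M (\<lambda>\<omega>. (norm (m (Suc n) \<omega>))\<^sup>2)"
      by (rule integrable_dom[OF Ri]) (use pw in auto)
    have "integral\<^sup>L M (\<lambda>\<omega>. (norm (m (Suc n) \<omega>))\<^sup>2) \<le> integral\<^sup>L M R"
      using pw by (intro integral_mono[OF i Ri]) auto
    also have "integral\<^sup>L M R = h (Suc n) * (\<mu> * integral\<^sup>L M (\<lambda>\<omega>. (norm (m n \<omega>))\<^sup>2) / h n + \<eta> (Suc n) * integral\<^sup>L M (\<lambda>\<omega>. (norm (g (Suc n) \<omega>))\<^sup>2))"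
      unfolding R_def using Suc.IH gi by simp
    also have "\<dots> \<le> h (Suc n) * (\<mu> * (G\<^sup>2 * (h n)\<^sup>2) / h n + \<eta> (Suc n) * G\<^sup>2)"
      using Suc.IH gb hp ep mu h_nonneg[of "Suc n"]
      by (intro mult_left_mono add_mono divide_right_mono) auto
    also have "\<dots> = G\<^sup>2 * (h (Suc n))\<^sup>2" using hp by (simp add: power2_eq_square field_simps)
    finally show ?thesis using i by simp
  qed
qed

end

lemma amgm: "(a::real) * b \<le> (a\<^sup>2 + b\<^sup>2) / 2"
proof -
  have "0 \<le> (a - b)\<^sup>2" by simp
  then show ?thesis by (simp add: power2_eq_square algebra_simps)
qed

lemma inner_amgm: "\<bar>(v::'a::real_inner) \<bullet> w\<bar> \<le> ((norm v)\<^sup>2 + (norm w)\<^sup>2) / 2"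
  using Cauchy_Schwarz_ineq2[of v w] amgm[of "norm v" "norm w"] by linarith

context SUMloc
begin

interpretation P: prob_space M by (rule M)

lemma cond_exp_inner:
  assumes t: "t \<ge> 1" and vm: "v \<in> borel_measurable (hist M g t)"
    and vi: "integrable M (\<lambda>\<omega>. (norm (v \<omega>))\<^sup>2)"
    and gi: "integrable M (\<lambda>\<omega>. (norm (grad (x t \<omega>)))\<^sup>2)"
  shows "integrable M (\<lambda>\<omega>. v \<omega> \<bullet> g t \<omega>)" "integrable M (\<lambda>\<omega>. v \<omega> \<bullet> grad (x t \<omega>))"
    "integral\<^sup>L M (\<lambda>\<omega>. v \<omega> \<bullet> g t \<omega>) = integral\<^sup>L M (\<lambda>\<omega>. v \<omega> \<bullet> grad (x t \<omega>))"
proof -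
  interpret S: sigma_finite_subalgebra M "hist M g t" by (rule sfs_hist)
  have vM[measurable]: "v \<in> borel_measurable M" by (rule measurable_from_subalg[OF subalg_hist vm])
  have [measurable]: "g t \<in> borel_measurable M" using g_meas t by simp
  have [measurable]: "x t \<in> borel_measurable M" using t by simp
  have ggi: "integrable M (\<lambda>\<omega>. (norm (g t \<omega>))\<^sup>2)" using g_sq_int t by simp
  have fbm: "(\<lambda>\<omega>. v \<omega> \<bullet> b) \<in> borel_measurable (hist M g t)" for b using vm by measurable
  have i1: "integrable M (\<lambda>\<omega>. (v \<omega> \<bullet> b) * (g t \<omega> \<bullet> b))" if b: "b \<in> Basis" for b
  proof (rule integrable_dom[where h="\<lambda>\<omega>. ((norm (v \<omega>))\<^sup>2 + (norm (g t \<omega>))\<^sup>2) / 2"])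
    show "integrable M (\<lambda>\<omega>. ((norm (v \<omega>))\<^sup>2 + (norm (g t \<omega>))\<^sup>2) / 2)" using vi ggi by auto
    show "(\<lambda>\<omega>. (v \<omega> \<bullet> b) * (g t \<omega> \<bullet> b)) \<in> borel_measurable M" by measurable
    fix \<omega>
    have "\<bar>(v \<omega> \<bullet> b) * (g t \<omega> \<bullet> b)\<bar> \<le> norm (v \<omega>) * norm (g t \<omega>)"
      unfolding abs_mult using Basis_le_norm[OF b] by (intro mult_mono) auto
    then show "\<bar>(v \<omega> \<bullet> b) * (g t \<omega> \<bullet> b)\<bar> \<le> ((norm (v \<omega>))\<^sup>2 + (norm (g t \<omega>))\<^sup>2) / 2"
      using amgm[of "norm (v \<omega>)" "norm (g t \<omega>)"] by linarith
  qed
  have i2: "integrable M (\<lambda>\<omega>. (v \<omega> \<bullet> b) * (grad (x t \<omega>) \<bullet> b))" if b: "b \<in> Basis" for b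
  proof (rule integrable_dom[where h="\<lambda>\<omega>. ((norm (v \<omega>))\<^sup>2 + (norm (grad (x t \<omega>)))\<^sup>2) / 2"])
    show "integrable M (\<lambda>\<omega>. ((norm (v \<omega>))\<^sup>2 + (norm (grad (x t \<omega>)))\<^sup>2) / 2)" using vi gi by auto
    show "(\<lambda>\<omega>. (v \<omega> \<bullet> b) * (grad (x t \<omega>) \<bullet> b)) \<in> borel_measurable M" by measurable
    fix \<omega>
    have "\<bar>(v \<omega> \<bullet> b) * (grad (x t \<omega>) \<bullet> b)\<bar> \<le> norm (v \<omega>) * norm (grad (x t \<omega>))"
      unfolding abs_mult using Basis_le_norm[OF b] by (intro mult_mono) auto
    then show "\<bar>(v \<omega> \<bullet> b) * (grad (x t \<omega>) \<bullet> b)\<bar> \<le> ((norm (v \<omega>))\<^sup>2 + (norm (grad (x t \<omega>)))\<^sup>2) / 2"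
      using amgm[of "norm (v \<omega>)" "norm (grad (x t \<omega>))"] by linarith
  qed
  have eqb: "integral\<^sup>L M (\<lambda>\<omega>. (v \<omega> \<bullet> b) * (g t \<omega> \<bullet> b)) = integral\<^sup>L M (\<lambda>\<omega>. (v \<omega> \<bullet> b) * (grad (x t \<omega>) \<bullet> b))"
    if b: "b \<in> Basis" for b
  proof -
    have "integral\<^sup>L M (\<lambda>\<omega>. (v \<omega> \<bullet> b) * (g t \<omega> \<bullet> b)) = integral\<^sup>L M (\<lambda>\<omega>. (v \<omega> \<bullet> b) * real_cond_exp M (hist M g t) (\<lambda>\<omega>. g t \<omega> \<bullet> b) \<omega>)"
      by (rule S.real_cond_exp_intg(2)[OF i1[OF b] fbm, symmetric]) measurable
    also have "\<dots> = integral\<^sup>L M (\<lambda>\<omega>. (v \<omega> \<bullet> b) * (grad (x t \<omega>) \<bullet> b))"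
    proof (rule integral_cong_AE)
      show "AE \<omega> in M. (v \<omega> \<bullet> b) * real_cond_exp M (hist M g t) (\<lambda>\<omega>. g t \<omega> \<bullet> b) \<omega> = (v \<omega> \<bullet> b) * (grad (x t \<omega>) \<bullet> b)"
        using g_unbiased[OF t b] by eventually_elim simp
    qed measurable
    finally show ?thesis .
  qed
  have s1: "(\<lambda>\<omega>. v \<omega> \<bullet> g t \<omega>) = (\<lambda>\<omega>. \<Sum>b\<in>Basis. (v \<omega> \<bullet> b) * (g t \<omega> \<bullet> b))"
    by (rule ext, rule euclidean_inner)
  have s2: "(\<lambda>\<omega>. v \<omega> \<bullet> grad (x t \<omega>)) = (\<lambda>\<omega>. \<Sum>b\<in>Basis. (v \<omega> \<bullet> b) * (grad (x t \<omega>) \<bullet> b))"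
    by (rule ext, rule euclidean_inner)
  show "integrable M (\<lambda>\<omega>. v \<omega> \<bullet> g t \<omega>)" unfolding s1 using i1 by auto
  show "integrable M (\<lambda>\<omega>. v \<omega> \<bullet> grad (x t \<omega>))" unfolding s2 using i2 by auto
  show "integral\<^sup>L M (\<lambda>\<omega>. v \<omega> \<bullet> g t \<omega>) = integral\<^sup>L M (\<lambda>\<omega>. v \<omega> \<bullet> grad (x t \<omega>))"
    unfolding s1 s2 using i1 i2 eqb by (simp add: Bochner_Integration.integral_sum)
qed

definition \<gamma> where "\<gamma> = c * \<mu> / (1 - \<mu>)"
definition \<kappa> where "\<kappa> = lam + c + \<gamma>"

lemma gamma_nonneg: "\<gamma> \<ge> 0" unfolding \<gamma>_def using c_ge mu by simp
lemma kappa_ge: "\<kappa> \<ge> 1"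
proof -
  have "lam + c = 1 + \<mu> * lam" unfolding c_def by (simp add: algebra_simps)
  then show ?thesis unfolding \<kappa>_def using gamma_nonneg mu lam by (smt (verit) mult_nonneg_nonneg)
qed

definition zz where "zz n \<omega> = x (Suc n) \<omega> + \<gamma> *\<^sub>R m n \<omega>"

lemma zz_step: "\<omega> \<in> space M \<Longrightarrow> zz (Suc n) \<omega> = zz n \<omega> - (\<kappa> * \<eta> (Suc n)) *\<^sub>R g (Suc n) \<omega>"
proof -
  assume w: "\<omega> \<in> space M"
  have eq: "(c + \<gamma>) * \<mu> = \<gamma>" unfolding \<gamma>_def using mu by (simp add: field_simps)
  have xs: "x (Suc (Suc n)) \<omega> = x (Suc n) \<omega> - (lam * \<eta> (Suc n)) *\<^sub>R g (Suc n) \<omega> + c *\<^sub>R m (Suc n) \<omega>"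
    using x_step[of "Suc n" \<omega>] w unfolding c_def by simp
  have ms: "m (Suc n) \<omega> = \<mu> *\<^sub>R m n \<omega> - \<eta> (Suc n) *\<^sub>R g (Suc n) \<omega>" using m_step[of "Suc n" \<omega>] w by simp
  have "zz (Suc n) \<omega> = x (Suc n) \<omega> + ((c + \<gamma>) * \<mu>) *\<^sub>R m n \<omega> - ((lam + c + \<gamma>) * \<eta> (Suc n)) *\<^sub>R g (Suc n) \<omega>"
    unfolding zz_def xs ms by (simp add: algebra_simps)
  then show ?thesis unfolding eq zz_def \<kappa>_def by simp
qed

lemma zz0: "\<omega> \<in> space M \<Longrightarrow> zz 0 \<omega> = x 1 \<omega>" unfolding zz_def using m0 by simp

lemma zz_meas[measurable]: "zz n \<in> borel_measurable M" unfolding zz_def by measurable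

lemma zz_meas_hist: "zz n \<in> borel_measurable (hist M g (Suc n))"
proof -
  have [measurable]: "x (Suc n) \<in> borel_measurable (hist M g (Suc n))" by (rule x_meas_hist) auto
  have [measurable]: "m n \<in> borel_measurable (hist M g (Suc n))" by (rule m_meas_hist) auto
  show ?thesis unfolding zz_def by measurable
qed

lemma grad_x_bound: "(norm (grad (x (Suc n) \<omega>)))\<^sup>2 \<le> 2 * (norm (grad (zz n \<omega>)))\<^sup>2 + 2 * (L1 * \<gamma>)\<^sup>2 * (norm (m n \<omega>))\<^sup>2"
proof -
  have "norm (grad (x (Suc n) \<omega>)) \<le> norm (grad (zz n \<omega>)) + norm (grad (x (Suc n) \<omega>) - grad (zz n \<omega>))"
    using norm_triangle_ineq[of "grad (zz n \<omega>)" "grad (x (Suc n) \<omega>) - grad (zz n \<omega>)"] by simp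
  also have "norm (grad (x (Suc n) \<omega>) - grad (zz n \<omega>)) \<le> L1 * norm (x (Suc n) \<omega> - zz n \<omega>)" by (rule Lip1)
  also have "norm (x (Suc n) \<omega> - zz n \<omega>) = \<gamma> * norm (m n \<omega>)" unfolding zz_def using gamma_nonneg by simp
  finally have "norm (grad (x (Suc n) \<omega>)) \<le> norm (grad (zz n \<omega>)) + (L1 * \<gamma>) * norm (m n \<omega>)" by simp
  then have "(norm (grad (x (Suc n) \<omega>)))\<^sup>2 \<le> (norm (grad (zz n \<omega>)) + (L1 * \<gamma>) * norm (m n \<omega>))\<^sup>2"
    by (intro power_mono) auto
  also have "\<dots> \<le> 2 * (norm (grad (zz n \<omega>)))\<^sup>2 + 2 * ((L1 * \<gamma>) * norm (m n \<omega>))\<^sup>2"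
    using amgm[of "norm (grad (zz n \<omega>))" "(L1 * \<gamma>) * norm (m n \<omega>)"] by (simp add: power2_eq_square algebra_simps)
  finally show ?thesis by (simp add: power_mult_distrib)
qed

end

context SUMloc
begin

interpretation P: prob_space M by (rule M)

lemma gz_int:
  assumes "integrable M (\<lambda>\<omega>. f (zz n \<omega>))"
  shows "integrable M (\<lambda>\<omega>. (norm (grad (zz n \<omega>)))\<^sup>2)"
proof (rule integrable_dom[where h="\<lambda>\<omega>. 4 * L1 * (f (zz n \<omega>) - fs)"])
  show "integrable M (\<lambda>\<omega>. 4 * L1 * (f (zz n \<omega>) - fs))" using assms by auto
  show "(\<lambda>\<omega>. (norm (grad (zz n \<omega>)))\<^sup>2) \<in> borel_measurable M" by measurable
  show "\<bar>(norm (grad (zz n \<omega>)))\<^sup>2\<bar> \<le> 4 * L1 * (f (zz n \<omega>) - fs)" for \<omega>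
    using grad_bound[of "zz n \<omega>"] by simp
qed

lemma a_int:
  assumes "integrable M (\<lambda>\<omega>. f (zz n \<omega>))"
  shows "integrable M (\<lambda>\<omega>. (norm (grad (x (Suc n) \<omega>)))\<^sup>2)"
proof (rule integrable_dom[where h="\<lambda>\<omega>. 2 * (norm (grad (zz n \<omega>)))\<^sup>2 + 2 * (L1 * \<gamma>)\<^sup>2 * (norm (m n \<omega>))\<^sup>2"])
  show "integrable M (\<lambda>\<omega>. 2 * (norm (grad (zz n \<omega>)))\<^sup>2 + 2 * (L1 * \<gamma>)\<^sup>2 * (norm (m n \<omega>))\<^sup>2)"
    using gz_int[OF assms] m_mom[of n] by auto
  show "(\<lambda>\<omega>. (norm (grad (x (Suc n) \<omega>)))\<^sup>2) \<in> borel_measurable M" by measurable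
  show "\<bar>(norm (grad (x (Suc n) \<omega>)))\<^sup>2\<bar> \<le> 2 * (norm (grad (zz n \<omega>)))\<^sup>2 + 2 * (L1 * \<gamma>)\<^sup>2 * (norm (m n \<omega>))\<^sup>2" for \<omega>
    using grad_x_bound[of n \<omega>] by simp
qed

lemma fz_step_pw:
  assumes w: "\<omega> \<in> space M"
  shows "f (zz (Suc n) \<omega>) \<le> f (zz n \<omega>) - (\<kappa> * \<eta> (Suc n)) * (grad (zz n \<omega>) \<bullet> g (Suc n) \<omega>)
            + L1 * (\<kappa> * \<eta> (Suc n))\<^sup>2 * (norm (g (Suc n) \<omega>))\<^sup>2"
proof -
  have "f (zz (Suc n) \<omega>) \<le> f (zz n \<omega>) + grad (zz n \<omega>) \<bullet> (zz (Suc n) \<omega> - zz n \<omega>) + L1 * (norm (zz (Suc n) \<omega> - zz n \<omega>))\<^sup>2"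
    by (rule descent)
  also have "zz (Suc n) \<omega> - zz n \<omega> = - ((\<kappa> * \<eta> (Suc n)) *\<^sub>R g (Suc n) \<omega>)" using zz_step[OF w] by simp
  finally show ?thesis by (simp add: power_mult_distrib)
qed

lemma fz_int: "integrable M (\<lambda>\<omega>. f (zz n \<omega>))"
proof (induction n)
  case 0
  obtain x1' where x1': "\<forall>\<omega>\<in>space M. x 1 \<omega> = x1'" using x1 by blast
  have "integrable M (\<lambda>\<omega>. f (zz 0 \<omega>)) = integrable M (\<lambda>\<omega>. f x1')"
    using zz0 x1' by (intro Bochner_Integration.integrable_cong) auto
  then show ?case by simp
next
  case (Suc n)
  define e where "e = \<kappa> * \<eta> (Suc n)"
  have gi: "integrable M (\<lambda>\<omega>. (norm (g (Suc n) \<omega>))\<^sup>2)" using g_sq_int by simp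
  show ?case
  proof (rule integrable_dom[where h="\<lambda>\<omega>. \<bar>fs\<bar> + \<bar>f (zz n \<omega>)\<bar> + (norm (grad (zz n \<omega>)))\<^sup>2 / 2
        + (1/2 + L1) * e\<^sup>2 * (norm (g (Suc n) \<omega>))\<^sup>2"])
    show "integrable M (\<lambda>\<omega>. \<bar>fs\<bar> + \<bar>f (zz n \<omega>)\<bar> + (norm (grad (zz n \<omega>)))\<^sup>2 / 2
        + (1/2 + L1) * e\<^sup>2 * (norm (g (Suc n) \<omega>))\<^sup>2)"
      using Suc gz_int[OF Suc] gi by auto
    show "(\<lambda>\<omega>. f (zz (Suc n) \<omega>)) \<in> borel_measurable M" by measurable
    fix \<omega> assume w: "\<omega> \<in> space M"
    have lb: "fs \<le> f (zz (Suc n) \<omega>)" by (rule f_lb)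
    have ub: "f (zz (Suc n) \<omega>) \<le> f (zz n \<omega>) - e * (grad (zz n \<omega>) \<bullet> g (Suc n) \<omega>) + L1 * e\<^sup>2 * (norm (g (Suc n) \<omega>))\<^sup>2"
      using fz_step_pw[OF w] unfolding e_def .
    have "\<bar>e * (grad (zz n \<omega>) \<bullet> g (Suc n) \<omega>)\<bar> = \<bar>grad (zz n \<omega>) \<bullet> (e *\<^sub>R g (Suc n) \<omega>)\<bar>" by (simp add: abs_mult)
    also have "\<dots> \<le> ((norm (grad (zz n \<omega>)))\<^sup>2 + (norm (e *\<^sub>R g (Suc n) \<omega>))\<^sup>2) / 2" by (rule inner_amgm)
    finally have ib: "\<bar>e * (grad (zz n \<omega>) \<bullet> g (Suc n) \<omega>)\<bar> \<le> ((norm (grad (zz n \<omega>)))\<^sup>2 + e\<^sup>2 * (norm (g (Suc n) \<omega>))\<^sup>2) / 2"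
      by (simp add: power_mult_distrib)
    have "L1 * e\<^sup>2 * (norm (g (Suc n) \<omega>))\<^sup>2 \<ge> 0" using L1_pos by simp
    then show "\<bar>f (zz (Suc n) \<omega>)\<bar> \<le> \<bar>fs\<bar> + \<bar>f (zz n \<omega>)\<bar> + (norm (grad (zz n \<omega>)))\<^sup>2 / 2
        + (1/2 + L1) * e\<^sup>2 * (norm (g (Suc n) \<omega>))\<^sup>2"
      using lb ub ib by (simp add: algebra_simps abs_le_iff) linarith
  qed
qed

lemma gz_int': "integrable M (\<lambda>\<omega>. (norm (grad (zz n \<omega>)))\<^sup>2)" using gz_int[OF fz_int] .
lemma a_int': "integrable M (\<lambda>\<omega>. (norm (grad (x (Suc n) \<omega>)))\<^sup>2)" using a_int[OF fz_int] .

definition F where "F n = integral\<^sup>L M (\<lambda>\<omega>. f (zz n \<omega>))"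
definition aa where "aa n = integral\<^sup>L M (\<lambda>\<omega>. (norm (grad (x (Suc n) \<omega>)))\<^sup>2)"

lemma inner_lower: "(norm (grad (x (Suc n) \<omega>)))\<^sup>2 / 2 - (L1 * \<gamma>)\<^sup>2 * (norm (m n \<omega>))\<^sup>2 / 2 \<le> grad (zz n \<omega>) \<bullet> grad (x (Suc n) \<omega>)"
proof -
  define p where "p = grad (zz n \<omega>)"
  define q where "q = grad (x (Suc n) \<omega>)"
  have id: "(norm (p - q))\<^sup>2 = (norm p)\<^sup>2 + (norm q)\<^sup>2 - 2 * (p \<bullet> q)"
    by (simp add: power2_norm_eq_inner inner_diff_left inner_diff_right inner_commute)
  have "norm (p - q) \<le> L1 * norm (zz n \<omega> - x (Suc n) \<omega>)" unfolding p_def q_def by (rule Lip1)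
  also have "norm (zz n \<omega> - x (Suc n) \<omega>) = \<gamma> * norm (m n \<omega>)" unfolding zz_def using gamma_nonneg by simp
  finally have "(norm (p - q))\<^sup>2 \<le> (L1 * (\<gamma> * norm (m n \<omega>)))\<^sup>2" by (intro power_mono) auto
  then have "(norm (p - q))\<^sup>2 \<le> (L1 * \<gamma>)\<^sup>2 * (norm (m n \<omega>))\<^sup>2" by (simp add: power_mult_distrib)
  moreover have "(norm p)\<^sup>2 \<ge> 0" by simp
  ultimately show ?thesis using id unfolding p_def[symmetric] q_def[symmetric] by linarith
qed

lemma F_step: "F (Suc n) \<le> F n - (\<kappa> / 2) * \<eta> (Suc n) * aa n
   + \<kappa> * \<eta> (Suc n) * (L1 * \<gamma>)\<^sup>2 * G\<^sup>2 * (h n)\<^sup>2 / 2 + L1 * \<kappa>\<^sup>2 * (\<eta> (Suc n))\<^sup>2 * G\<^sup>2"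
proof -
  define e where "e = \<kappa> * \<eta> (Suc n)"
  have e0: "e \<ge> 0" unfolding e_def using kappa_ge eta_pos[of "Suc n"] by simp
  have gi: "integrable M (\<lambda>\<omega>. (norm (g (Suc n) \<omega>))\<^sup>2)" using g_sq_int by simp
  have gb: "integral\<^sup>L M (\<lambda>\<omega>. (norm (g (Suc n) \<omega>))\<^sup>2) \<le> G\<^sup>2" using g_bdd by simp
  have vm: "(\<lambda>\<omega>. grad (zz n \<omega>)) \<in> borel_measurable (hist M g (Suc n))"
    using zz_meas_hist[of n] by measurable
  note ce = cond_exp_inner[of "Suc n", OF _ vm gz_int' a_int']
  have ip: "integrable M (\<lambda>\<omega>. grad (zz n \<omega>) \<bullet> g (Suc n) \<omega>)" using ce(1) by simp
  have ip2: "integrable M (\<lambda>\<omega>. grad (zz n \<omega>) \<bullet> grad (x (Suc n) \<omega>))" using ce(2) by simp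
  have ieq: "integral\<^sup>L M (\<lambda>\<omega>. grad (zz n \<omega>) \<bullet> g (Suc n) \<omega>) = integral\<^sup>L M (\<lambda>\<omega>. grad (zz n \<omega>) \<bullet> grad (x (Suc n) \<omega>))"
    using ce(3) by simp
  have mi: "integrable M (\<lambda>\<omega>. (norm (m n \<omega>))\<^sup>2)" and mb: "integral\<^sup>L M (\<lambda>\<omega>. (norm (m n \<omega>))\<^sup>2) \<le> G\<^sup>2 * (h n)\<^sup>2"
    using m_mom[of n] by auto
  have "F (Suc n) \<le> integral\<^sup>L M (\<lambda>\<omega>. f (zz n \<omega>) - e * (grad (zz n \<omega>) \<bullet> g (Suc n) \<omega>) + L1 * e\<^sup>2 * (norm (g (Suc n) \<omega>))\<^sup>2)"
    unfolding F_def e_def using fz_step_pw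
    by (intro integral_mono) (use fz_int ip gi in auto)
  also have "\<dots> = F n - e * integral\<^sup>L M (\<lambda>\<omega>. grad (zz n \<omega>) \<bullet> grad (x (Suc n) \<omega>)) + L1 * e\<^sup>2 * integral\<^sup>L M (\<lambda>\<omega>. (norm (g (Suc n) \<omega>))\<^sup>2)"
    unfolding F_def ieq[symmetric] using fz_int ip gi by simp
  finally have c1: "F (Suc n) \<le> F n - e * integral\<^sup>L M (\<lambda>\<omega>. grad (zz n \<omega>) \<bullet> grad (x (Suc n) \<omega>)) + L1 * e\<^sup>2 * integral\<^sup>L M (\<lambda>\<omega>. (norm (g (Suc n) \<omega>))\<^sup>2)" .
  have c2: "integral\<^sup>L M (\<lambda>\<omega>. grad (zz n \<omega>) \<bullet> grad (x (Suc n) \<omega>)) \<ge> integral\<^sup>L M (\<lambda>\<omega>. (norm (grad (x (Suc n) \<omega>)))\<^sup>2 / 2 - (L1 * \<gamma>)\<^sup>2 * (norm (m n \<omega>))\<^sup>2 / 2)"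
    using inner_lower by (intro integral_mono) (use a_int' mi ip2 in auto)
  have c3: "integral\<^sup>L M (\<lambda>\<omega>. (norm (grad (x (Suc n) \<omega>)))\<^sup>2 / 2 - (L1 * \<gamma>)\<^sup>2 * (norm (m n \<omega>))\<^sup>2 / 2)
      = aa n / 2 - (L1 * \<gamma>)\<^sup>2 * integral\<^sup>L M (\<lambda>\<omega>. (norm (m n \<omega>))\<^sup>2) / 2"
    unfolding aa_def using a_int' mi by simp
  have "F (Suc n) \<le> F n - e * (aa n / 2 - (L1 * \<gamma>)\<^sup>2 * integral\<^sup>L M (\<lambda>\<omega>. (norm (m n \<omega>))\<^sup>2) / 2)
       + L1 * e\<^sup>2 * integral\<^sup>L M (\<lambda>\<omega>. (norm (g (Suc n) \<omega>))\<^sup>2)"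
    using c1 c2 c3 e0 by (smt (verit) mult_left_mono)
  also have "\<dots> \<le> F n - e * (aa n / 2 - (L1 * \<gamma>)\<^sup>2 * (G\<^sup>2 * (h n)\<^sup>2) / 2) + L1 * e\<^sup>2 * G\<^sup>2"
  proof -
    have "(L1 * \<gamma>)\<^sup>2 * integral\<^sup>L M (\<lambda>\<omega>. (norm (m n \<omega>))\<^sup>2) \<le> (L1 * \<gamma>)\<^sup>2 * (G\<^sup>2 * (h n)\<^sup>2)"
      using mb by (intro mult_left_mono) auto
    then have a: "e * ((L1 * \<gamma>)\<^sup>2 * integral\<^sup>L M (\<lambda>\<omega>. (norm (m n \<omega>))\<^sup>2) / 2) \<le> e * ((L1 * \<gamma>)\<^sup>2 * (G\<^sup>2 * (h n)\<^sup>2) / 2)"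
      using e0 by (intro mult_left_mono) auto
    have b: "L1 * e\<^sup>2 * integral\<^sup>L M (\<lambda>\<omega>. (norm (g (Suc n) \<omega>))\<^sup>2) \<le> L1 * e\<^sup>2 * G\<^sup>2"
      using gb L1_pos by (intro mult_left_mono) auto
    show ?thesis using a b by (simp add: right_diff_distrib)
  qed
  also have "\<dots> = F n - (\<kappa> / 2) * \<eta> (Suc n) * aa n
   + \<kappa> * \<eta> (Suc n) * (L1 * \<gamma>)\<^sup>2 * G\<^sup>2 * (h n)\<^sup>2 / 2 + L1 * \<kappa>\<^sup>2 * (\<eta> (Suc n))\<^sup>2 * G\<^sup>2"
    unfolding e_def by (simp add: algebra_simps power_mult_distrib)
  finally show ?thesis .
qed

end

lemma amgm_e: assumes "e > 0" shows "2 * (a::real) * b \<le> e * a\<^sup>2 + b\<^sup>2 / e"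
proof -
  have "0 \<le> (e * a - b)\<^sup>2 / e" using assms by simp
  also have "(e * a - b)\<^sup>2 / e = e * a\<^sup>2 + b\<^sup>2 / e - 2 * a * b" using assms
    by (simp add: power2_eq_square field_simps)
  finally show ?thesis by simp
qed

context SUMloc
begin

interpretation P: prob_space M by (rule M)

definition DD where "DD n \<omega> = x (Suc (Suc n)) \<omega> - x (Suc n) \<omega>"

lemma DD_eq: "\<omega> \<in> space M \<Longrightarrow> DD n \<omega> = (c * \<mu>) *\<^sub>R m n \<omega> - ((lam + c) * \<eta> (Suc n)) *\<^sub>R g (Suc n) \<omega>"
proof -
  assume w: "\<omega> \<in> space M"
  have xs: "x (Suc (Suc n)) \<omega> = x (Suc n) \<omega> - (lam * \<eta> (Suc n)) *\<^sub>R g (Suc n) \<omega> + c *\<^sub>R m (Suc n) \<omega>"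
    using x_step[of "Suc n" \<omega>] w unfolding c_def by simp
  have ms: "m (Suc n) \<omega> = \<mu> *\<^sub>R m n \<omega> - \<eta> (Suc n) *\<^sub>R g (Suc n) \<omega>" using m_step[of "Suc n" \<omega>] w by simp
  show ?thesis unfolding DD_def xs ms by (simp add: algebra_simps)
qed

lemma DD_bound: "\<omega> \<in> space M \<Longrightarrow> (norm (DD n \<omega>))\<^sup>2 \<le> 2 * (c * \<mu>)\<^sup>2 * (norm (m n \<omega>))\<^sup>2 + 2 * ((lam + c) * \<eta> (Suc n))\<^sup>2 * (norm (g (Suc n) \<omega>))\<^sup>2"
proof -
  assume w: "\<omega> \<in> space M"
  have cm: "c * \<mu> \<ge> 0" using c_ge mu by simp
  have lc: "(lam + c) * \<eta> (Suc n) \<ge> 0" using c_ge lam eta_pos[of "Suc n"] by simp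
  have "norm (DD n \<omega>) \<le> (c * \<mu>) * norm (m n \<omega>) + ((lam + c) * \<eta> (Suc n)) * norm (g (Suc n) \<omega>)"
    unfolding DD_eq[OF w] using norm_triangle_ineq4[of "(c * \<mu>) *\<^sub>R m n \<omega>" "((lam + c) * \<eta> (Suc n)) *\<^sub>R g (Suc n) \<omega>"] cm lc
    by simp
  then have "(norm (DD n \<omega>))\<^sup>2 \<le> ((c * \<mu>) * norm (m n \<omega>) + ((lam + c) * \<eta> (Suc n)) * norm (g (Suc n) \<omega>))\<^sup>2"
    by (intro power_mono) auto
  also have "\<dots> \<le> 2 * ((c * \<mu>) * norm (m n \<omega>))\<^sup>2 + 2 * (((lam + c) * \<eta> (Suc n)) * norm (g (Suc n) \<omega>))\<^sup>2"
    using amgm[of "(c * \<mu>) * norm (m n \<omega>)" "((lam + c) * \<eta> (Suc n)) * norm (g (Suc n) \<omega>)"]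
    by (simp add: power2_eq_square algebra_simps)
  finally show ?thesis by (simp add: power_mult_distrib)
qed

lemma grad_step_pw:
  assumes "\<omega> \<in> space M"
  shows "(norm (grad (x (Suc (Suc n)) \<omega>)))\<^sup>2 \<le> (1 + L1 * \<eta> (Suc n)) * (norm (grad (x (Suc n) \<omega>)))\<^sup>2
     + (L1 / \<eta> (Suc n) + L1\<^sup>2) * (norm (DD n \<omega>))\<^sup>2"
proof -
  define e where "e = \<eta> (Suc n)"
  have e: "e > 0" unfolding e_def using eta_pos by simp
  define p where "p = norm (grad (x (Suc n) \<omega>))"
  define d where "d = norm (DD n \<omega>)"
  have "norm (grad (x (Suc (Suc n)) \<omega>)) \<le> p + norm (grad (x (Suc (Suc n)) \<omega>) - grad (x (Suc n) \<omega>))"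
    unfolding p_def using norm_triangle_ineq[of "grad (x (Suc n) \<omega>)" "grad (x (Suc (Suc n)) \<omega>) - grad (x (Suc n) \<omega>)"] by simp
  also have "norm (grad (x (Suc (Suc n)) \<omega>) - grad (x (Suc n) \<omega>)) \<le> L1 * d" unfolding d_def DD_def by (rule Lip1)
  finally have "norm (grad (x (Suc (Suc n)) \<omega>)) \<le> p + L1 * d" by simp
  then have "(norm (grad (x (Suc (Suc n)) \<omega>)))\<^sup>2 \<le> (p + L1 * d)\<^sup>2" by (intro power_mono) auto
  also have "\<dots> = p\<^sup>2 + L1 * (2 * p * d) + L1\<^sup>2 * d\<^sup>2" by (simp add: power2_eq_square algebra_simps)
  also have "\<dots> \<le> p\<^sup>2 + L1 * (e * p\<^sup>2 + d\<^sup>2 / e) + L1\<^sup>2 * d\<^sup>2"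
    using amgm_e[OF e, of p d] L1_pos by (intro add_mono mult_left_mono) auto
  also have "\<dots> = (1 + L1 * e) * p\<^sup>2 + (L1 / e + L1\<^sup>2) * d\<^sup>2" by (simp add: algebra_simps)
  finally show ?thesis unfolding e_def p_def d_def .
qed

lemma aa_step: "aa (Suc n) \<le> (1 + L1 * \<eta> (Suc n)) * aa n
   + (L1 / \<eta> (Suc n) + L1\<^sup>2) * (2 * (c * \<mu>)\<^sup>2 * (G\<^sup>2 * (h n)\<^sup>2) + 2 * ((lam + c) * \<eta> (Suc n))\<^sup>2 * G\<^sup>2)"
proof -
  define e where "e = \<eta> (Suc n)"
  have e: "e > 0" unfolding e_def using eta_pos by simp
  define k where "k = L1 / e + L1\<^sup>2"
  have k: "k \<ge> 0" unfolding k_def using e L1_pos by simp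
  have gi: "integrable M (\<lambda>\<omega>. (norm (g (Suc n) \<omega>))\<^sup>2)" using g_sq_int by simp
  have gb: "integral\<^sup>L M (\<lambda>\<omega>. (norm (g (Suc n) \<omega>))\<^sup>2) \<le> G\<^sup>2" using g_bdd by simp
  have mi: "integrable M (\<lambda>\<omega>. (norm (m n \<omega>))\<^sup>2)" and mb: "integral\<^sup>L M (\<lambda>\<omega>. (norm (m n \<omega>))\<^sup>2) \<le> G\<^sup>2 * (h n)\<^sup>2"
    using m_mom[of n] by auto
  define R where "R \<omega> = (1 + L1 * e) * (norm (grad (x (Suc n) \<omega>)))\<^sup>2
     + k * (2 * (c * \<mu>)\<^sup>2 * (norm (m n \<omega>))\<^sup>2 + 2 * ((lam + c) * e)\<^sup>2 * (norm (g (Suc n) \<omega>))\<^sup>2)" for \<omega>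
  have Ri: "integrable M R" unfolding R_def using a_int'[of n] mi gi by auto
  have pw: "(norm (grad (x (Suc (Suc n)) \<omega>)))\<^sup>2 \<le> R \<omega>" if w: "\<omega> \<in> space M" for \<omega>
  proof -
    have "(norm (grad (x (Suc (Suc n)) \<omega>)))\<^sup>2 \<le> (1 + L1 * e) * (norm (grad (x (Suc n) \<omega>)))\<^sup>2 + k * (norm (DD n \<omega>))\<^sup>2"
      using grad_step_pw[OF w, of n] unfolding e_def k_def .
    also have "k * (norm (DD n \<omega>))\<^sup>2 \<le> k * (2 * (c * \<mu>)\<^sup>2 * (norm (m n \<omega>))\<^sup>2 + 2 * ((lam + c) * e)\<^sup>2 * (norm (g (Suc n) \<omega>))\<^sup>2)"
      using DD_bound[OF w, of n] k unfolding e_def by (intro mult_left_mono) auto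
    finally show ?thesis unfolding R_def by simp
  qed
  have "aa (Suc n) \<le> integral\<^sup>L M R" unfolding aa_def
    using pw by (intro integral_mono) (use a_int'[of "Suc n"] Ri in auto)
  also have "integral\<^sup>L M R = (1 + L1 * e) * aa n + k * (2 * (c * \<mu>)\<^sup>2 * integral\<^sup>L M (\<lambda>\<omega>. (norm (m n \<omega>))\<^sup>2)
      + 2 * ((lam + c) * e)\<^sup>2 * integral\<^sup>L M (\<lambda>\<omega>. (norm (g (Suc n) \<omega>))\<^sup>2))"
    unfolding R_def aa_def using a_int'[of n] mi gi by simp
  also have "\<dots> \<le> (1 + L1 * e) * aa n + k * (2 * (c * \<mu>)\<^sup>2 * (G\<^sup>2 * (h n)\<^sup>2) + 2 * ((lam + c) * e)\<^sup>2 * G\<^sup>2)"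
    using mb gb k by (intro add_mono mult_left_mono order_refl) auto
  finally show ?thesis unfolding k_def e_def .
qed

end

context SUMloc
begin

interpretation P: prob_space M by (rule M)

lemma eta_to0: "(\<lambda>t. \<eta> (Suc t)) \<longlonglongrightarrow> 0"
proof -
  have "(\<lambda>t. (\<eta> (t + 1))\<^sup>2) \<longlonglongrightarrow> 0" by (rule summable_LIMSEQ_zero[OF eta_sq])
  then have "(\<lambda>t. sqrt ((\<eta> (t + 1))\<^sup>2)) \<longlonglongrightarrow> sqrt 0" by (rule tendsto_real_sqrt)
  moreover have "sqrt ((\<eta> (t + 1))\<^sup>2) = \<eta> (Suc t)" for t using eta_pos[of "Suc t"] by simp
  ultimately show ?thesis by simp
qed

lemma eta_bdd: "\<exists>K>0. \<forall>t. \<eta> (Suc t) \<le> K"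
proof -
  have "Bseq (\<lambda>t. \<eta> (Suc t))" using eta_to0 by (rule convergent_imp_Bseq[OF convergentI])
  then obtain K where "K > 0" "\<forall>t. norm (\<eta> (Suc t)) \<le> K" by (auto elim: BseqE)
  then show ?thesis by (metis abs_le_D1 real_norm_def)
qed

lemma F_lb: "F n \<ge> fs"
proof -
  have "integral\<^sup>L M (\<lambda>\<omega>. fs) \<le> F n" unfolding F_def using fz_int f_lb by (intro integral_mono) auto
  then show ?thesis by (simp add: P.prob_space)
qed

lemma gz_F: "integral\<^sup>L M (\<lambda>\<omega>. (norm (grad (zz n \<omega>)))\<^sup>2) \<le> 4 * L1 * (F n - fs)"
proof -
  have "integral\<^sup>L M (\<lambda>\<omega>. (norm (grad (zz n \<omega>)))\<^sup>2) \<le> integral\<^sup>L M (\<lambda>\<omega>. 4 * L1 * (f (zz n \<omega>) - fs))"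
    using grad_bound by (intro integral_mono) (use gz_int' fz_int in auto)
  also have "\<dots> = 4 * L1 * (F n - fs)" unfolding F_def using fz_int by (simp add: P.prob_space)
  finally show ?thesis .
qed

lemma aa_nonneg: "aa n \<ge> 0" unfolding aa_def by simp

lemma aa_zz: "aa n \<le> 2 * (4 * L1 * (F n - fs)) + 2 * (L1 * \<gamma>)\<^sup>2 * (G\<^sup>2 * (h n)\<^sup>2)"
proof -
  have mi: "integrable M (\<lambda>\<omega>. (norm (m n \<omega>))\<^sup>2)" and mb: "integral\<^sup>L M (\<lambda>\<omega>. (norm (m n \<omega>))\<^sup>2) \<le> G\<^sup>2 * (h n)\<^sup>2"
    using m_mom[of n] by auto
  have "aa n \<le> integral\<^sup>L M (\<lambda>\<omega>. 2 * (norm (grad (zz n \<omega>)))\<^sup>2 + 2 * (L1 * \<gamma>)\<^sup>2 * (norm (m n \<omega>))\<^sup>2)"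
    unfolding aa_def using grad_x_bound by (intro integral_mono) (use a_int' gz_int' mi in auto)
  also have "\<dots> = 2 * integral\<^sup>L M (\<lambda>\<omega>. (norm (grad (zz n \<omega>)))\<^sup>2) + 2 * (L1 * \<gamma>)\<^sup>2 * integral\<^sup>L M (\<lambda>\<omega>. (norm (m n \<omega>))\<^sup>2)"
    using gz_int' mi by simp
  also have "\<dots> \<le> 2 * (4 * L1 * (F n - fs)) + 2 * (L1 * \<gamma>)\<^sup>2 * (G\<^sup>2 * (h n)\<^sup>2)"
    using gz_F[of n] mb by (intro add_mono mult_left_mono) auto
  finally show ?thesis .
qed

lemma main_lim: "aa \<longlonglongrightarrow> 0"
proof -
  obtain K where K: "K > 0" "\<And>t. \<eta> (Suc t) \<le> K" using eta_bdd by blast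
  define H where "H = K / (1 - \<mu>)"
  have hb: "h t \<le> H" for t unfolding H_def using hs_bound[where \<eta>=\<eta> and K=K and t=t, OF mu(1) mu(2) less_imp_le[OF K(1)]] K(2) by auto
  obtain B0 N where BN: "\<forall>t\<ge>N. h t \<le> B0 * \<eta> (Suc t)" using hs_ratio[OF mu eta_pos eta_ratio] by blast
  define B where "B = \<bar>B0\<bar>"
  have B: "B \<ge> 0" unfolding B_def by simp
  have hB: "h t \<le> B * \<eta> (Suc t)" if "t \<ge> N" for t
  proof -
    have "B0 * \<eta> (Suc t) \<le> B * \<eta> (Suc t)" unfolding B_def using eta_pos[of "Suc t"] by (intro mult_right_mono) auto
    then show ?thesis using BN that by force
  qed
  have hB2: "(h t)\<^sup>2 \<le> B\<^sup>2 * (\<eta> (Suc t))\<^sup>2" if "t \<ge> N" for t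
  proof -
    have "(h t)\<^sup>2 \<le> (B * \<eta> (Suc t))\<^sup>2" using hB[OF that] h_nonneg by (intro power_mono) auto
    then show ?thesis by (simp add: power_mult_distrib)
  qed
  define err where "err n = \<kappa> * \<eta> (Suc n) * (L1 * \<gamma>)\<^sup>2 * G\<^sup>2 * (h n)\<^sup>2 / 2 + L1 * \<kappa>\<^sup>2 * (\<eta> (Suc n))\<^sup>2 * G\<^sup>2" for n
  have err0: "err n \<ge> 0" for n unfolding err_def using kappa_ge eta_pos[of "Suc n"] L1_pos by simp
  have sq: "summable (\<lambda>n. (\<eta> (Suc n))\<^sup>2)" using eta_sq by simp
  have err_sum: "summable err"
  proof -
    have s1: "summable (\<lambda>n. L1 * \<kappa>\<^sup>2 * G\<^sup>2 * (\<eta> (Suc n))\<^sup>2)" using sq by (rule summable_mult)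
    have s2: "summable (\<lambda>n. \<kappa> * (L1 * \<gamma>)\<^sup>2 * G\<^sup>2 / 2 * (K * B\<^sup>2) * (\<eta> (Suc n))\<^sup>2)" using sq by (rule summable_mult)
    have s3: "summable (\<lambda>n. \<kappa> * \<eta> (Suc n) * (L1 * \<gamma>)\<^sup>2 * G\<^sup>2 * (h n)\<^sup>2 / 2)"
    proof (rule summable_comparison_test'[OF s2, of N])
      fix n assume n: "N \<le> n"
      have c0: "\<kappa> * (L1 * \<gamma>)\<^sup>2 * G\<^sup>2 / 2 \<ge> 0" using kappa_ge by simp
      have e0: "\<eta> (Suc n) > 0" using eta_pos by simp
      have "\<eta> (Suc n) * (h n)\<^sup>2 \<le> \<eta> (Suc n) * (B\<^sup>2 * (\<eta> (Suc n))\<^sup>2)" using hB2[OF n] e0 by (intro mult_left_mono) auto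
      also have "\<dots> = (\<eta> (Suc n) * B\<^sup>2) * (\<eta> (Suc n))\<^sup>2" by simp
      also have "\<dots> \<le> (K * B\<^sup>2) * (\<eta> (Suc n))\<^sup>2" using K(2)[of n] B by (intro mult_right_mono) auto
      finally have "\<eta> (Suc n) * (h n)\<^sup>2 \<le> (K * B\<^sup>2) * (\<eta> (Suc n))\<^sup>2" .
      then have "(\<kappa> * (L1 * \<gamma>)\<^sup>2 * G\<^sup>2 / 2) * (\<eta> (Suc n) * (h n)\<^sup>2) \<le> (\<kappa> * (L1 * \<gamma>)\<^sup>2 * G\<^sup>2 / 2) * ((K * B\<^sup>2) * (\<eta> (Suc n))\<^sup>2)"
        using c0 by (intro mult_left_mono) auto
      moreover have "\<kappa> * \<eta> (Suc n) * (L1 * \<gamma>)\<^sup>2 * G\<^sup>2 * (h n)\<^sup>2 / 2 \<ge> 0" using kappa_ge e0 by simp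
      ultimately show "norm (\<kappa> * \<eta> (Suc n) * (L1 * \<gamma>)\<^sup>2 * G\<^sup>2 * (h n)\<^sup>2 / 2) \<le> \<kappa> * (L1 * \<gamma>)\<^sup>2 * G\<^sup>2 / 2 * (K * B\<^sup>2) * (\<eta> (Suc n))\<^sup>2"
        by (simp add: algebra_simps)
    qed
    have "summable (\<lambda>n. \<kappa> * \<eta> (Suc n) * (L1 * \<gamma>)\<^sup>2 * G\<^sup>2 * (h n)\<^sup>2 / 2 + L1 * \<kappa>\<^sup>2 * G\<^sup>2 * (\<eta> (Suc n))\<^sup>2)"
      using s3 s1 by (rule summable_add)
    then show ?thesis unfolding err_def by (simp add: algebra_simps)
  qed
  define E where "E = suminf err"
  have errE: "sum err {..<T} \<le> E" for T unfolding E_def using err_sum err0 by (intro sum_le_suminf) auto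
  have tele: "F T + (\<kappa> / 2) * (\<Sum>n<T. \<eta> (Suc n) * aa n) \<le> F 0 + sum err {..<T}" for T
  proof (induction T)
    case 0 then show ?case by simp
  next
    case (Suc T)
    have "F (Suc T) \<le> F T - (\<kappa> / 2) * \<eta> (Suc T) * aa T + err T" using F_step[of T] unfolding err_def by simp
    then show ?case using Suc by (simp add: algebra_simps)
  qed
  have Fb: "F T \<le> F 0 + E" for T
  proof -
    have "(\<kappa> / 2) * (\<Sum>n<T. \<eta> (Suc n) * aa n) \<ge> 0" using kappa_ge eta_pos aa_nonneg
      by (intro mult_nonneg_nonneg sum_nonneg) (auto intro: less_imp_le)
    then show ?thesis using tele[of T] errE[of T] by linarith
  qed
  have Sb: "(\<Sum>n<T. \<eta> (Suc n) * aa n) \<le> 2 / \<kappa> * (F 0 + E - fs)" for T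
  proof -
    have "(\<kappa> / 2) * (\<Sum>n<T. \<eta> (Suc n) * aa n) \<le> F 0 + E - fs" using tele[of T] errE[of T] F_lb[of T] by linarith
    then show ?thesis using kappa_ge by (simp add: field_simps)
  qed
  have sm: "summable (\<lambda>n. \<eta> (Suc n) * aa n)"
  proof (rule bounded_imp_summable[where B="2 / \<kappa> * (F 0 + E - fs)"])
    show "0 \<le> \<eta> (Suc n) * aa n" for n using eta_pos[of "Suc n"] aa_nonneg[of n] by simp
    show "(\<Sum>k\<le>n. \<eta> (Suc k) * aa k) \<le> 2 / \<kappa> * (F 0 + E - fs)" for n
      using Sb[of "Suc n"] by (simp add: lessThan_Suc_atMost)
  qed
  define A where "A = 2 * (4 * L1 * (F 0 + E - fs)) + 2 * (L1 * \<gamma>)\<^sup>2 * (G\<^sup>2 * H\<^sup>2)"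
  have Ab: "aa n \<le> A" for n
  proof -
    have "2 * (4 * L1 * (F n - fs)) \<le> 2 * (4 * L1 * (F 0 + E - fs))" using Fb[of n] L1_pos by simp
    moreover have "(h n)\<^sup>2 \<le> H\<^sup>2" using hb[of n] h_nonneg[of n] by (intro power_mono) auto
    then have "2 * (L1 * \<gamma>)\<^sup>2 * (G\<^sup>2 * (h n)\<^sup>2) \<le> 2 * (L1 * \<gamma>)\<^sup>2 * (G\<^sup>2 * H\<^sup>2)" by (intro mult_left_mono) auto
    ultimately show ?thesis using aa_zz[of n] unfolding A_def by linarith
  qed
  define Q where "Q = 2 * (c * \<mu>)\<^sup>2 * G\<^sup>2 * B\<^sup>2 + 2 * (lam + c)\<^sup>2 * G\<^sup>2"
  have Q: "Q \<ge> 0" unfolding Q_def by simp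
  define C where "C = L1 * A + (L1 + L1\<^sup>2 * K) * Q"
  have inc: "aa (Suc n) \<le> aa n + C * \<eta> (Suc n)" if n: "n \<ge> N" for n
  proof -
    define e where "e = \<eta> (Suc n)"
    have e: "e > 0" unfolding e_def using eta_pos by simp
    have eK: "e \<le> K" unfolding e_def using K by simp
    have s0: "aa (Suc n) \<le> (1 + L1 * e) * aa n + (L1 / e + L1\<^sup>2) * (2 * (c * \<mu>)\<^sup>2 * (G\<^sup>2 * (h n)\<^sup>2) + 2 * ((lam + c) * e)\<^sup>2 * G\<^sup>2)"
      using aa_step[of n] unfolding e_def .
    have "2 * (c * \<mu>)\<^sup>2 * (G\<^sup>2 * (h n)\<^sup>2) + 2 * ((lam + c) * e)\<^sup>2 * G\<^sup>2 \<le> Q * e\<^sup>2"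
    proof -
      have "G\<^sup>2 * (h n)\<^sup>2 \<le> G\<^sup>2 * (B\<^sup>2 * e\<^sup>2)" using hB2[OF n] unfolding e_def by (intro mult_left_mono) auto
      then have "2 * (c * \<mu>)\<^sup>2 * (G\<^sup>2 * (h n)\<^sup>2) \<le> 2 * (c * \<mu>)\<^sup>2 * (G\<^sup>2 * (B\<^sup>2 * e\<^sup>2))" by (rule mult_left_mono) auto
      then have X: "2 * (c * \<mu>)\<^sup>2 * (G\<^sup>2 * (h n)\<^sup>2) \<le> 2 * (c * \<mu>)\<^sup>2 * G\<^sup>2 * B\<^sup>2 * e\<^sup>2" by (simp add: mult.assoc)
      have Y: "2 * ((lam + c) * e)\<^sup>2 * G\<^sup>2 = 2 * (lam + c)\<^sup>2 * G\<^sup>2 * e\<^sup>2" by (simp add: power_mult_distrib)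
      have Z: "Q * e\<^sup>2 = 2 * (c * \<mu>)\<^sup>2 * G\<^sup>2 * B\<^sup>2 * e\<^sup>2 + 2 * (lam + c)\<^sup>2 * G\<^sup>2 * e\<^sup>2" unfolding Q_def by (simp add: algebra_simps)
      show ?thesis using X Y Z by linarith
    qed
    then have "(L1 / e + L1\<^sup>2) * (2 * (c * \<mu>)\<^sup>2 * (G\<^sup>2 * (h n)\<^sup>2) + 2 * ((lam + c) * e)\<^sup>2 * G\<^sup>2) \<le> (L1 / e + L1\<^sup>2) * (Q * e\<^sup>2)"
      using e L1_pos by (intro mult_left_mono) auto
    also have "(L1 / e + L1\<^sup>2) * (Q * e\<^sup>2) = (L1 + L1\<^sup>2 * e) * Q * e" using e by (simp add: field_simps power2_eq_square)
    also have "\<dots> \<le> (L1 + L1\<^sup>2 * K) * Q * e" using eK e Q L1_pos by (intro mult_right_mono add_left_mono mult_left_mono) auto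
    finally have t2: "(L1 / e + L1\<^sup>2) * (2 * (c * \<mu>)\<^sup>2 * (G\<^sup>2 * (h n)\<^sup>2) + 2 * ((lam + c) * e)\<^sup>2 * G\<^sup>2) \<le> (L1 + L1\<^sup>2 * K) * Q * e" .
    have t1: "(1 + L1 * e) * aa n \<le> aa n + L1 * A * e"
    proof -
      have "L1 * e * aa n \<le> L1 * e * A" using Ab[of n] e L1_pos by (intro mult_left_mono) auto
      then show ?thesis by (simp add: algebra_simps)
    qed
    have "aa (Suc n) \<le> aa n + L1 * A * e + (L1 + L1\<^sup>2 * K) * Q * e"
      using s0 t1 t2 by linarith
    then show ?thesis unfolding C_def e_def by (simp add: algebra_simps)
  qed
  have p1: "\<And>t. 0 \<le> aa t" by (rule aa_nonneg)
  have p2: "\<And>t. 0 < \<eta> (Suc t)" using eta_pos by simp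
  have p4: "\<not> summable (\<lambda>t. \<eta> (Suc t))" using eta_div by simp
  show ?thesis by (rule seq_to_zero[OF p1 p2 sm p4 eta_to0 inc])
qed

end

theorem corollary3p2:
  fixes M :: "'w measure"
    and f :: "'a::euclidean_space \<Rightarrow> real"
    and grad :: "'a \<Rightarrow> 'a"
    and L G \<mu> lam :: real
    and \<eta> :: "nat \<Rightarrow> real"
    and g x m :: "nat \<Rightarrow> 'w \<Rightarrow> 'a"
  assumes M: "prob_space M"
    and f_grad: "\<And>z. (f has_derivative (\<lambda>h. grad z \<bullet> h)) (at z)"
    and f_bdd: "bdd_below (range f)"
    and Lip: "\<And>y z. norm (grad y - grad z) \<le> L * norm (y - z)"
    and mu: "0 \<le> \<mu>" "\<mu> < 1"
    and lam: "0 \<le> lam" "lam \<le> 1 / (1 - \<mu>)"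
    and eta_pos: "\<And>t. t \<ge> 1 \<Longrightarrow> \<eta> t > 0"
    and eta_div: "\<not> summable (\<lambda>t. \<eta> (t + 1))"
    and eta_sq: "summable (\<lambda>t. (\<eta> (t + 1))\<^sup>2)"
    and eta_ratio: "(\<lambda>t. \<eta> t / \<eta> (t + 1)) \<longlonglongrightarrow> 1"
    and x1: "\<exists>x1. \<forall>\<omega>\<in>space M. x 1 \<omega> = x1"
    and m0: "\<forall>\<omega>\<in>space M. m 0 \<omega> = 0"
    and m_step: "\<And>t \<omega>. t \<ge> 1 \<Longrightarrow> \<omega> \<in> space M \<Longrightarrow>
                   m t \<omega> = \<mu> *\<^sub>R m (t - 1) \<omega> - \<eta> t *\<^sub>R g t \<omega>"
    and x_step: "\<And>t \<omega>. t \<ge> 1 \<Longrightarrow> \<omega> \<in> space M \<Longrightarrow>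
                   x (t + 1) \<omega> = x t \<omega> - (lam * \<eta> t) *\<^sub>R g t \<omega>
                                  + (1 - (1 - \<mu>) * lam) *\<^sub>R m t \<omega>"
    and g_meas: "\<And>t. t \<ge> 1 \<Longrightarrow> g t \<in> borel_measurable M"
    and g_unbiased: "\<And>t b. t \<ge> 1 \<Longrightarrow> b \<in> Basis \<Longrightarrow>
                   AE \<omega> in M. real_cond_exp M (hist M g t) (\<lambda>\<omega>. g t \<omega> \<bullet> b) \<omega>
                                = grad (x t \<omega>) \<bullet> b"
    and g_sq_int: "\<And>t. t \<ge> 1 \<Longrightarrow> integrable M (\<lambda>\<omega>. (norm (g t \<omega>))\<^sup>2)"
    and g_bdd: "\<And>t. t \<ge> 1 \<Longrightarrow> integral\<^sup>L M (\<lambda>\<omega>. (norm (g t \<omega>))\<^sup>2) \<le> G\<^sup>2"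
  shows "(\<forall>t\<ge>1. integrable M (\<lambda>\<omega>. (norm (grad (x t \<omega>)))\<^sup>2))
    \<and> (\<lambda>T. Min ((\<lambda>t. integral\<^sup>L M (\<lambda>\<omega>. (norm (grad (x t \<omega>)))\<^sup>2)) ` {1..T}))
         \<longlonglongrightarrow> 0
    \<and> (\<lambda>T. (\<Sum>t=1..T. integral\<^sup>L M (\<lambda>\<omega>. (norm (grad (x t \<omega>)))\<^sup>2)) / real T)
         \<longlonglongrightarrow> 0"
proof -
  interpret S: SUMloc M f grad L G \<mu> lam \<eta> g x m
    by (rule SUMloc.intro) (fact assms)+
  define a where "a t = integral\<^sup>L M (\<lambda>\<omega>. (norm (grad (x t \<omega>)))\<^sup>2)" for t
  have "(\<lambda>n. a (Suc n)) \<longlonglongrightarrow> 0" using S.main_lim unfolding S.aa_def a_def .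
  then have lim: "a \<longlonglongrightarrow> 0" by (rule LIMSEQ_imp_Suc)
  have a0: "a t \<ge> 0" for t unfolding a_def by simp
  have c1: "\<forall>t\<ge>1. integrable M (\<lambda>\<omega>. (norm (grad (x t \<omega>)))\<^sup>2)"
  proof (intro allI impI)
    fix t :: nat assume "t \<ge> 1"
    then obtain n where "t = Suc n" by (cases t) auto
    then show "integrable M (\<lambda>\<omega>. (norm (grad (x t \<omega>)))\<^sup>2)" using S.a_int'[of n] by simp
  qed
  have c2: "(\<lambda>T. Min (a ` {1..T})) \<longlonglongrightarrow> 0"
  proof (rule tendsto_sandwich[where f="\<lambda>_. 0" and h=a])
    show "\<forall>\<^sub>F T in sequentially. 0 \<le> Min (a ` {1..T})"
      using eventually_ge_at_top[of "1::nat"] by eventually_elim (auto simp: Min_ge_iff a0)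
    show "\<forall>\<^sub>F T in sequentially. Min (a ` {1..T}) \<le> a T"
      using eventually_ge_at_top[of "1::nat"] by eventually_elim (auto intro: Min_le)
  qed (use lim in auto)
  have c3: "(\<lambda>T. (\<Sum>t=1..T. a t) / real T) \<longlonglongrightarrow> 0" by (rule cesaro0[OF lim])
  show ?thesis using c1 c2 c3 unfolding a_def by simp
qed


end
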